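(* Consider any run of shadow moat growing on $(G,t)$ with final growth values $(y_S)$, and any tree $T$ in $G$ with leaf set $S'\subseteq V$. Then $$\mathrm{UM}(T)\ \ge\ c(T)-\sum_{S\subseteq V:\ S\odot S'} y_S .$$
   Context: $G=(V,E,c)$ is an undirected graph with edge costs $c\ge0$; $\delta(S)$ is the set of edges with exactly one endpoint in $S$; $c(T)=\sum_{e\in T}c_e$. Shadow moat growing on $(G,t)$, $t:V\to\mathbb{R}_{\ge0}$: continuous process in time maintaining a forest (initially empty), its components, and $y_S\ge0$ (initially $0$); at time $\tau$ a component $C$ is active iff some $w\in C$ has $t_w>\tau$, and each active $C$ increases $y_C$ at rate $1$; an edge $e$ between different components with $\sum_{S:e\in\delta(S)}y_S=c_e$ is added and the components merge; stop when nothing is active. In every run $\sum_{S:e\in\delta(S)}y_S\le c_e$ for all edges. For $S,A\subseteq V$, $S\odot A$ means $S\cap A\neq\emptyset$ and $A\not\subseteq S$. For a forest $F$: $\mathrm{UC}(F)=\sum_{e\in F}\big(c_e-\sum_{S:e\in\delta(S)}y_S\big)$; $\mathrm{MC}(F)=\sum_{S:\,|\delta(S)\cap F|\ge2}|\delta(S)\cap F|\,y_S$; $\mathrm{UM}(F)=\mathrm{UC}(F)+\mathrm{MC}(F)$. *)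

theory Defs
  imports Complex_Main
begin

definition graph :: "'a set \<Rightarrow> 'a set set \<Rightarrow> ('a set \<Rightarrow> real) \<Rightarrow> bool" where
  "graph V E c \<longleftrightarrow> finite V \<and> (\<forall>e\<in>E. \<exists>u v. e = {u, v} \<and> u \<noteq> v \<and> u \<in> V \<and> v \<in> V)
     \<and> (\<forall>e\<in>E. c e \<ge> 0)"

definition delta :: "'a set set \<Rightarrow> 'a set \<Rightarrow> 'a set set" where
  "delta E S = {e \<in> E. card (e \<inter> S) = 1}"

definition cost :: "('a set \<Rightarrow> real) \<Rightarrow> 'a set set \<Rightarrow> real" where
  "cost c T = (\<Sum>e\<in>T. c e)"

definition load :: "'a set \<Rightarrow> 'a set set \<Rightarrow> ('a set \<Rightarrow> real) \<Rightarrow> 'a set \<Rightarrow> real" where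
  "load V E y e = (\<Sum>S\<in>{S. S \<subseteq> V \<and> e \<in> delta E S}. y S)"

definition adj :: "'a set set \<Rightarrow> ('a \<times> 'a) set" where
  "adj F = {(u, w). {u, w} \<in> F}"

definition comp :: "'a set \<Rightarrow> 'a set set \<Rightarrow> 'a \<Rightarrow> 'a set" where
  "comp V F v = {w \<in> V. (v, w) \<in> (adj F)\<^sup>*}"

definition comps :: "'a set \<Rightarrow> 'a set set \<Rightarrow> 'a set set" where
  "comps V F = comp V F ` V"

definition crossing :: "'a set \<Rightarrow> 'a set set \<Rightarrow> 'a set \<Rightarrow> bool" where
  "crossing V F e \<longleftrightarrow> (\<exists>u v. e = {u, v} \<and> comp V F u \<noteq> comp V F v)"

definition active :: "('a \<Rightarrow> real) \<Rightarrow> real \<Rightarrow> 'a set \<Rightarrow> bool" where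
  "active t \<tau> C \<longleftrightarrow> (\<exists>w\<in>C. t w > \<tau>)"

text \<open>Reachable states (F, y, tau) of shadow moat growing on (G, t), described as a
  finite sequence of events: adding a tight edge between different components, or
  growing all active components by some delta > 0 during an interval in which the set of
  active components does not change and no edge between different components is tight
  at its start (tight edges are added immediately).\<close>
inductive moat_state :: "'a set \<Rightarrow> 'a set set \<Rightarrow> ('a set \<Rightarrow> real) \<Rightarrow> ('a \<Rightarrow> real)
    \<Rightarrow> 'a set set \<Rightarrow> ('a set \<Rightarrow> real) \<Rightarrow> real \<Rightarrow> bool"
  for V E c t where
  init: "moat_state V E c t {} (\<lambda>S. 0) 0"
| add: "\<lbrakk> moat_state V E c t F y \<tau>; e \<in> E; crossing V F e; load V E y e = c e \<rbrakk>
        \<Longrightarrow> moat_state V E c t (insert e F) y \<tau>"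
| grow: "\<lbrakk> moat_state V E c t F y \<tau>; d > 0;
           \<forall>e\<in>E. crossing V F e \<longrightarrow> load V E y e < c e;
           \<forall>C\<in>comps V F. active t \<tau> C \<longrightarrow> (\<exists>w\<in>C. t w \<ge> \<tau> + d);
           y' = (\<lambda>S. if S \<in> comps V F \<and> active t \<tau> S then y S + d else y S);
           \<forall>e\<in>E. crossing V F e \<longrightarrow> load V E y' e \<le> c e \<rbrakk>
        \<Longrightarrow> moat_state V E c t F y' (\<tau> + d)"

definition moat_final :: "'a set \<Rightarrow> 'a set set \<Rightarrow> ('a set \<Rightarrow> real) \<Rightarrow> ('a \<Rightarrow> real)
    \<Rightarrow> 'a set set \<Rightarrow> ('a set \<Rightarrow> real) \<Rightarrow> real \<Rightarrow> bool" where
  "moat_final V E c t F y \<tau> \<longleftrightarrow> moat_state V E c t F y \<tau> \<and> (\<forall>C\<in>comps V F. \<not> active t \<tau> C)"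

definition has_cycle :: "'a set set \<Rightarrow> bool" where
  "has_cycle F \<longleftrightarrow> (\<exists>vs. length vs \<ge> 3 \<and> distinct vs \<and>
      (\<forall>i < length vs. {vs ! i, vs ! ((i + 1) mod length vs)} \<in> F))"

definition is_tree_in :: "'a set set \<Rightarrow> 'a set set \<Rightarrow> bool" where
  "is_tree_in E T \<longleftrightarrow> T \<subseteq> E \<and> \<not> has_cycle T \<and>
      (\<forall>u\<in>\<Union>T. \<forall>v\<in>\<Union>T. (u, v) \<in> (adj T)\<^sup>*)"

definition leaves :: "'a set set \<Rightarrow> 'a set" where
  "leaves T = {v \<in> \<Union>T. card {e \<in> T. v \<in> e} = 1}"

definition odot :: "'a set \<Rightarrow> 'a set \<Rightarrow> bool" where
  "odot S A \<longleftrightarrow> S \<inter> A \<noteq> {} \<and> \<not> A \<subseteq> S"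

definition UC :: "'a set \<Rightarrow> 'a set set \<Rightarrow> ('a set \<Rightarrow> real) \<Rightarrow> ('a set \<Rightarrow> real) \<Rightarrow> 'a set set \<Rightarrow> real" where
  "UC V E c y F = (\<Sum>e\<in>F. c e - load V E y e)"

definition MC :: "'a set \<Rightarrow> 'a set set \<Rightarrow> ('a set \<Rightarrow> real) \<Rightarrow> 'a set set \<Rightarrow> real" where
  "MC V E y F = (\<Sum>S\<in>{S. S \<subseteq> V \<and> card (delta E S \<inter> F) \<ge> 2}. real (card (delta E S \<inter> F)) * y S)"

definition UM :: "'a set \<Rightarrow> 'a set set \<Rightarrow> ('a set \<Rightarrow> real) \<Rightarrow> ('a set \<Rightarrow> real) \<Rightarrow> 'a set set \<Rightarrow> real" where
  "UM V E c y F = UC V E c y F + MC V E y F"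

end

theory Submission
  imports Defs
begin

lemma leaf_exists:
  assumes fin: "finite T"
  and two: "\<And>f. f \<in> T \<Longrightarrow> \<exists>a b. f = {a,b} \<and> a \<noteq> b"
  and acyc: "\<not> has_cycle T"
  and eT: "e \<in> T" and eX: "card (e \<inter> X) = 1"
  and uniq: "\<And>f. f \<in> T \<Longrightarrow> card (f \<inter> X) = 1 \<Longrightarrow> f = e"
  shows "\<exists>v\<in>X. v \<in> leaves T"
proof (rule ccontr)
  assume nl: "\<not> ?thesis"
  obtain u w where e: "e = {u,w}" "u \<in> X" "w \<notin> X"
  proof -
    obtain a b where ab: "e = {a,b}" "a \<noteq> b" using two[OF eT] by blast
    show ?thesis
    proof (cases "a \<in> X")
      case True
      then have "b \<notin> X" using eX ab by auto
      then show ?thesis using that ab True by blast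
    next
      case False
      then have "b \<in> X" using eX ab by (cases "b \<in> X") auto
      then show ?thesis using that[of b a] ab False by (simp add: insert_commute)
    qed
  qed
  have finU: "finite (\<Union>T)" using fin two by (metis finite.emptyI finite.insertI finite_Union)
  have deg: "\<exists>f\<in>T. v \<in> f \<and> f \<noteq> g" if v: "v \<in> X" "v \<in> \<Union>T" for v g
  proof (rule ccontr)
    assume "\<not> ?thesis"
    then have D: "{f\<in>T. v\<in>f} \<subseteq> {g}" by auto
    moreover have "{f\<in>T. v\<in>f} \<noteq> {}" using v by auto
    ultimately have "{f\<in>T. v\<in>f} = {g}" by blast
    then have "v \<in> leaves T" using v unfolding leaves_def by auto
    then show False using nl v by blast
  qed
  have uU: "u \<in> \<Union>T" using eT e by auto
  have ext: "\<exists>vs. length vs = Suc n \<and> distinct vs \<and> set vs \<subseteq> X \<inter> \<Union>T \<and> last vs = u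
      \<and> (\<forall>i. Suc i < length vs \<longrightarrow> {vs!i, vs!Suc i} \<in> T)" for n
  proof (induction n)
    case 0
    show ?case by (rule exI[of _ "[u]"]) (use e uU in auto)
  next
    case (Suc n)
    then obtain vs where vs: "length vs = Suc n" "distinct vs" "set vs \<subseteq> X \<inter> \<Union>T" "last vs = u"
      "\<forall>i. Suc i < length vs \<longrightarrow> {vs!i, vs!Suc i} \<in> T" by blast
    then obtain x rest where xr: "vs = x # rest" by (cases vs) auto
    have xX: "x \<in> X" "x \<in> \<Union>T" using vs xr by auto
    obtain z where z: "{x,z} \<in> T" "z \<in> X" "z \<noteq> x" "rest \<noteq> [] \<longrightarrow> z \<noteq> hd rest"
    proof (cases rest)
      case Nil
      then have xu: "x = u" using vs xr by simp
      obtain f where f: "f \<in> T" "u \<in> f" "f \<noteq> e" using deg[OF e(2) uU, of e] by blast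
      obtain a b where ab: "f = {a,b}" "a \<noteq> b" using two[OF f(1)] by blast
      obtain z where fz: "f = {u,z}" "z \<noteq> u" using ab f(2) by (metis insert_commute insertE singletonD)
      have "z \<in> X"
      proof (rule ccontr)
        assume "z \<notin> X"
        then have "f \<inter> X = {u}" using fz e by auto
        then show False using uniq[OF f(1)] f(3) by simp
      qed
      then show ?thesis using that[of z] fz f xu Nil by auto
    next
      case (Cons y r)
      have "u \<in> set rest" using vs xr Cons by (metis last_ConsR last_in_set list.distinct(1))
      then have xu: "x \<noteq> u" using vs xr by auto
      obtain f where f: "f \<in> T" "x \<in> f" "f \<noteq> {x,y}" using deg[OF xX, of "{x,y}"] by blast
      obtain a b where ab: "f = {a,b}" "a \<noteq> b" using two[OF f(1)] by blast
      obtain z where fz: "f = {x,z}" "z \<noteq> x" using ab f(2) by (metis insert_commute insertE singletonD)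
      have zy: "z \<noteq> y" using fz f by auto
      have "x \<notin> e" using e xu xX by auto
      then have fe: "f \<noteq> e" using f by auto
      have "z \<in> X"
      proof (rule ccontr)
        assume "z \<notin> X"
        then have "f \<inter> X = {x}" using fz xX by auto
        then show False using uniq[OF f(1)] fe by simp
      qed
      then show ?thesis using that[of z] fz f zy Cons by auto
    qed
    have znot: "z \<notin> set vs"
    proof
      assume "z \<in> set vs"
      then obtain j where j: "j < length vs" "vs ! j = z" by (metis in_set_conv_nth)
      have j0: "j \<noteq> 0" proof assume "j = 0" then show False using j z xr by simp qed
      have j1: "j \<noteq> 1"
      proof
        assume "j = 1"
        then have "rest \<noteq> []" "hd rest = z" using j xr by (auto simp: hd_conv_nth)
        then show False using z by auto
      qed
      define cs where "cs = take (Suc j) vs"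
      have lcs: "length cs = Suc j" using j cs_def by simp
      have "has_cycle T"
        unfolding has_cycle_def
      proof (intro exI conjI allI impI)
        show "3 \<le> length cs" using lcs j0 j1 by simp
        show "distinct cs" using vs cs_def by simp
        fix i assume i: "i < length cs"
        show "{cs ! i, cs ! ((i + 1) mod length cs)} \<in> T"
        proof (cases "i < j")
          case True
          then have "(i+1) mod length cs = Suc i" using lcs by simp
          then show ?thesis using vs(5) True j cs_def by simp
        next
          case False
          then have "i = j" using i lcs by simp
          have "cs ! i = z" using \<open>i = j\<close> cs_def j by (simp add: nth_take)
          moreover have "cs ! ((i+1) mod length cs) = x" using \<open>i = j\<close> lcs cs_def xr by simp
          ultimately show ?thesis using z by (simp add: insert_commute)
        qed
      qed
      then show False using acyc by simp
    qed
    show ?case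
    proof (rule exI[of _ "z # vs"], intro conjI allI impI)
      show "length (z # vs) = Suc (Suc n)" using vs by simp
      show "distinct (z # vs)" using vs znot by simp
      show "set (z # vs) \<subseteq> X \<inter> \<Union>T" using vs z by auto
      show "last (z # vs) = u" using vs xr by simp
      fix i assume "Suc i < length (z # vs)"
      then show "{(z # vs) ! i, (z # vs) ! Suc i} \<in> T"
        using vs z xr by (cases i) (auto simp: insert_commute)
    qed
  qed
  obtain vs where vs: "length vs = Suc (card (\<Union>T))" "distinct vs" "set vs \<subseteq> X \<inter> \<Union>T"
    using ext by blast
  have "card (set vs) \<le> card (\<Union>T)" using vs(3) finU by (intro card_mono) auto
  then show False using vs distinct_card by fastforce
qed


lemma card_compl_two:
  assumes "f = {a,b}" "a \<noteq> b"
  shows "card (f \<inter> - S) = 1 \<longleftrightarrow> card (f \<inter> S) = 1"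
proof (cases "a \<in> S"; cases "b \<in> S")
  assume "a \<in> S" "b \<in> S"
  then have "f \<inter> - S = {}" "f \<inter> S = {a,b}" using assms by auto
  then show ?thesis using assms by simp
next
  assume "a \<in> S" "b \<notin> S"
  then have "f \<inter> - S = {b}" "f \<inter> S = {a}" using assms by auto
  then show ?thesis by simp
next
  assume "a \<notin> S" "b \<in> S"
  then have "f \<inter> - S = {a}" "f \<inter> S = {b}" using assms by auto
  then show ?thesis by simp
next
  assume "a \<notin> S" "b \<notin> S"
  then have "f \<inter> - S = {a,b}" "f \<inter> S = {}" using assms by auto
  then show ?thesis using assms by simp
qed

lemma y_nonneg: "moat_state V E c t F y \<tau> \<Longrightarrow> y S \<ge> 0"
proof (induction rule: moat_state.induct)
  case init then show ?case by simp
next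
  case (add F y \<tau> e) then show ?case by simp
next
  case (grow F y \<tau> d y') then show ?case by (simp only:) (simp add: if_split)
qed

lemma odot_lemma:
  assumes fin: "finite T"
  and two: "\<And>f. f \<in> T \<Longrightarrow> \<exists>a b. f = {a,b} \<and> a \<noteq> b"
  and acyc: "\<not> has_cycle T"
  and eT: "e \<in> T" and eX: "card (e \<inter> S) = 1"
  and uniq: "\<And>f. f \<in> T \<Longrightarrow> card (f \<inter> S) = 1 \<Longrightarrow> f = e"
  shows "odot S (leaves T)"
proof -
  obtain v where v: "v \<in> S" "v \<in> leaves T" using leaf_exists[OF fin two acyc eT eX uniq] by blast
  have c2: "card (f \<inter> - S) = 1 \<longleftrightarrow> card (f \<inter> S) = 1" if fT: "f \<in> T" for f
  proof -
    obtain a b where "f = {a,b}" "a \<noteq> b" using two[OF fT] by blast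
    then show ?thesis by (rule card_compl_two)
  qed
  obtain w where w: "w \<in> - S" "w \<in> leaves T"
  proof -
    have "\<exists>v\<in>- S. v \<in> leaves T"
    proof (rule leaf_exists[OF fin two acyc eT])
      show "card (e \<inter> - S) = 1" using c2[OF eT] eX by simp
      fix f assume "f \<in> T" "card (f \<inter> - S) = 1"
      then have "card (f \<inter> S) = 1" using c2 by simp
      then show "f = e" using uniq \<open>f \<in> T\<close> by simp
    qed
    then show ?thesis using that by blast
  qed
  show ?thesis unfolding odot_def using v w by auto
qed

theorem mainTheorem11:
  fixes V :: "'a set" and E :: "'a set set" and c :: "'a set \<Rightarrow> real"
    and t :: "'a \<Rightarrow> real" and F :: "'a set set" and y :: "'a set \<Rightarrow> real" and \<tau> :: real
    and T :: "'a set set"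
  assumes "graph V E c"
    and "\<forall>v\<in>V. t v \<ge> 0"
    and "moat_final V E c t F y \<tau>"
    and "is_tree_in E T"
  shows "UM V E c y T \<ge> cost c T - (\<Sum>S\<in>{S. S \<subseteq> V \<and> odot S (leaves T)}. y S)"
proof -
  have finV: "finite V" using assms(1) unfolding graph_def by (rule conjunct1)
  have ms: "moat_state V E c t F y \<tau>" using assms(3) unfolding moat_final_def by (rule conjunct1)
  have ynn: "\<And>S. y S \<ge> 0" by (rule y_nonneg[OF ms])
  have TE: "T \<subseteq> E" and acyc: "\<not> has_cycle T" using assms(4) unfolding is_tree_in_def by simp_all
  have gE: "\<forall>e\<in>E. \<exists>u v. e = {u, v} \<and> u \<noteq> v \<and> u \<in> V \<and> v \<in> V" using assms(1) unfolding graph_def by (rule conjunct1[OF conjunct2])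
  have two: "\<exists>a b. f = {a,b} \<and> a \<noteq> b" if "f \<in> T" for f
  proof -
    have "f \<in> E" using TE that by (rule subsetD)
    then obtain a b where "f = {a,b}" "a \<noteq> b" using gE by blast
    then show ?thesis by blast
  qed
  have "E \<subseteq> Pow V"
  proof
    fix e assume "e \<in> E"
    then obtain a b where "e = {a,b}" "a \<in> V" "b \<in> V" using gE by blast
    then show "e \<in> Pow V" by auto
  qed
  then have finT: "finite T" using TE finV by (meson finite_Pow_iff finite_subset)
  define P where "P = Pow V"
  have finP: "finite P" using finV P_def by simp
  define k where "k S = card (delta E S \<inter> T)" for S
  have load: "load V E y e = (\<Sum>S\<in>P. if e \<in> delta E S then y S else 0)" for e
  proof -
    have "{S. S \<subseteq> V \<and> e \<in> delta E S} = {S\<in>P. e \<in> delta E S}" unfolding P_def by auto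
    then show ?thesis unfolding load_def using sum.inter_filter[OF finP, of y "\<lambda>S. e \<in> delta E S"] by simp
  qed
  have "(\<Sum>e\<in>T. load V E y e) = (\<Sum>S\<in>P. \<Sum>e\<in>T. if e \<in> delta E S then y S else 0)"
    unfolding load by (rule sum.swap)
  also have "\<dots> = (\<Sum>S\<in>P. real (k S) * y S)"
  proof (rule sum.cong[OF refl])
    fix S
    have "(\<Sum>e\<in>T. if e \<in> delta E S then y S else 0) = (\<Sum>e\<in>{e\<in>T. e \<in> delta E S}. y S)"
      using sum.inter_filter[OF finT, of "\<lambda>e. y S" "\<lambda>e. e \<in> delta E S"] by simp
    also have "{e\<in>T. e \<in> delta E S} = delta E S \<inter> T" by auto
    finally show "(\<Sum>e\<in>T. if e \<in> delta E S then y S else 0) = real (k S) * y S"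
      unfolding k_def by simp
  qed
  finally have L: "(\<Sum>e\<in>T. load V E y e) = (\<Sum>S\<in>P. real (k S) * y S)" .
  have MC: "MC V E y T = (\<Sum>S\<in>P. if k S \<ge> 2 then real (k S) * y S else 0)"
  proof -
    have "{S. S \<subseteq> V \<and> card (delta E S \<inter> T) \<ge> 2} = {S\<in>P. k S \<ge> 2}" unfolding P_def k_def by auto
    then show ?thesis unfolding MC_def k_def using sum.inter_filter[OF finP, of "\<lambda>S. real (card (delta E S \<inter> T)) * y S" "\<lambda>S. card (delta E S \<inter> T) \<ge> 2"] by simp
  qed
  have OD: "(\<Sum>S\<in>{S. S \<subseteq> V \<and> odot S (leaves T)}. y S) = (\<Sum>S\<in>P. if odot S (leaves T) then y S else 0)"
  proof -
    have "{S. S \<subseteq> V \<and> odot S (leaves T)} = {S\<in>P. odot S (leaves T)}" unfolding P_def by auto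
    then show ?thesis using sum.inter_filter[OF finP, of y "\<lambda>S. odot S (leaves T)"] by simp
  qed
  have key: "real (k S) * y S \<le> (if k S \<ge> 2 then real (k S) * y S else 0) + (if odot S (leaves T) then y S else 0)" for S
  proof -
    consider "k S = 0" | "k S = 1" | "k S \<ge> 2" by linarith
    then show ?thesis
    proof cases
      case 1 then show ?thesis using ynn by simp
    next
      case 2
      then have "card (delta E S \<inter> T) = 1" unfolding k_def .
      then obtain e where e: "delta E S \<inter> T = {e}" by (rule card_1_singletonE)
      have "odot S (leaves T)"
      proof (rule odot_lemma[OF finT two acyc])
        show "e \<in> T" using e by auto
        show "card (e \<inter> S) = 1" using e by (auto simp: delta_def)
        fix f assume "f \<in> T" "card (f \<inter> S) = 1"
        then have "f \<in> delta E S \<inter> T" using TE by (auto simp: delta_def)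
        then show "f = e" using e by auto
      qed
      then show ?thesis using 2 by simp
    next
      case 3 then show ?thesis using ynn by simp
    qed
  qed
  have "(\<Sum>S\<in>P. real (k S) * y S) \<le> MC V E y T + (\<Sum>S\<in>{S. S \<subseteq> V \<and> odot S (leaves T)}. y S)"
    unfolding MC OD sum.distrib[symmetric] by (rule sum_mono) (rule key)
  then show ?thesis unfolding UM_def UC_def cost_def sum_subtractf L by linarith
qed

end
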